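(* Consider decorated ideal hyperbolic triangles, parametrized by their generalized edge lengths $(l_1,l_2,l_3)\in\mathbb{R}^3$, with generalized angles $\theta_1,\theta_2,\theta_3$ ($\theta_i$ opposite the edge of length $l_i$), and set $x_i=\frac12(\theta_j+\theta_k-\theta_i)$ for $\{i,j,k\}=\{1,2,3\}$. Then the differential $1$-form $\omega=\sum_{i=1}^3 x_i\,dl_i$ is closed on $\mathbb{R}^3$, its integral $W(l)=\int_0^l\omega$ is a smooth strictly concave function on $\mathbb{R}^3$ (with negative definite Hessian), and $\partial W/\partial l_i=x_i$.
   Context: A decorated ideal triangle is an ideal hyperbolic triangle with a horodisk chosen at each of its three ideal vertices. The generalized angle $\theta_i$ at a vertex is twice the length of the arc of the chosen horocycle lying inside the triangle. The generalized length of an edge joining vertices $u,v$ with horodisks $B_u,B_v$ is the distance between $B_u$ and $B_v$ if they are disjoint, and minus the distance between the two points $\partial B_u\cap e$, $\partial B_v\cap e$ otherwise. Every $(l_1,l_2,l_3)\in\mathbb{R}^3$ is realized by a unique decorated ideal triangle up to isometry, and the angles and lengths satisfy $\frac{e^{l_i}}{2}=\frac{2}{\theta_j\theta_k}$ for $\{i,j,k\}=\{1,2,3\}$. *)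

theory Defs
  imports "HOL-Analysis.Analysis"
begin

definition gen_angles :: "real^3 \<Rightarrow> real^3" where
  "gen_angles l = (THE \<theta>. (\<forall>i. \<theta> $ i > 0) \<and>
     (\<forall>i j k. i \<noteq> j \<and> j \<noteq> k \<and> i \<noteq> k \<longrightarrow>
        exp (l $ i) / 2 = 2 / (\<theta> $ j * \<theta> $ k)))"

text \<open>x_i = (theta_j + theta_k - theta_i)/2, where theta_j + theta_k is the sum
  over the two indices different from i.\<close>
definition xcoef :: "real^3 \<Rightarrow> real^3" where
  "xcoef l = (\<chi> i. ((\<Sum>m\<in>UNIV - {i}. gen_angles l $ m) - gen_angles l $ i) / 2)"

definition Wfun :: "real^3 \<Rightarrow> real" where
  "Wfun l = integral {0..1} (\<lambda>t. \<Sum>i\<in>UNIV. xcoef (t *\<^sub>R l) $ i * l $ i)"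

definition pd :: "3 \<Rightarrow> (real^3 \<Rightarrow> real) \<Rightarrow> real^3 \<Rightarrow> real" where
  "pd i f l = deriv (\<lambda>t. f (l + t *\<^sub>R axis i 1)) 0"

fun iter_pd :: "3 list \<Rightarrow> (real^3 \<Rightarrow> real) \<Rightarrow> real^3 \<Rightarrow> real" where
  "iter_pd [] f = f"
| "iter_pd (i # is) f = pd i (iter_pd is f)"

definition smooth3 :: "(real^3 \<Rightarrow> real) \<Rightarrow> bool" where
  "smooth3 f \<longleftrightarrow> (\<forall>is. continuous_on UNIV (iter_pd is f) \<and>
     (\<forall>i l. (\<lambda>t. iter_pd is f (l + t *\<^sub>R axis i 1)) differentiable (at 0)))"

definition strictly_concave_on :: "'a::real_vector set \<Rightarrow> ('a \<Rightarrow> real) \<Rightarrow> bool" where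
  "strictly_concave_on S f \<longleftrightarrow> convex S \<and>
     (\<forall>x\<in>S. \<forall>y\<in>S. \<forall>t. x \<noteq> y \<and> 0 < t \<and> t < 1 \<longrightarrow>
        f ((1 - t) *\<^sub>R x + t *\<^sub>R y) > (1 - t) * f x + t * f y)"

definition hessian3 :: "(real^3 \<Rightarrow> real) \<Rightarrow> real^3 \<Rightarrow> real^3^3" where
  "hessian3 f l = (\<chi> i j. pd i (pd j f) l)"

end

theory Submission
  imports Defs
begin
definition ww :: "3 \<Rightarrow> real^3" where "ww m = (\<chi> n. if n = m then 1/2 else -1/2)"
definition aa :: "3 \<Rightarrow> real^3 \<Rightarrow> real" where "aa m l = exp (ww m \<bullet> l)"

lemma ww_inner: "ww m \<bullet> l = (\<Sum>n\<in>UNIV. (if n = m then 1/2 else -1/2) * l $ n)"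
  by (simp add: ww_def inner_vec_def)

lemma ww_inner3: "ww 1 \<bullet> l = (l$1 - l$2 - l$3)/2" "ww 2 \<bullet> l = (l$2 - l$1 - l$3)/2" "ww 3 \<bullet> l = (l$3 - l$1 - l$2)/2"
  by (simp_all add: ww_inner sum_3 field_simps)

lemma cand_ok: "i \<noteq> j \<Longrightarrow> j \<noteq> k \<Longrightarrow> i \<noteq> k \<Longrightarrow>
   exp (l $ i) / 2 = 2 / ((2 * aa j l) * (2 * aa k l))"
proof -
  assume h: "i \<noteq> j" "j \<noteq> k" "i \<noteq> k"
  have key: "l $ i + ww j \<bullet> l + ww k \<bullet> l = 0"
    using h exhaust_3[of i] exhaust_3[of j] exhaust_3[of k]
    by (auto simp: ww_inner3 field_simps)
  have "exp (l $ i) * (aa j l * aa k l) = 1"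
    using key by (simp add: aa_def exp_add[symmetric] add.assoc)
  then show ?thesis
    by (simp add: aa_def field_simps)
qed

lemma gen_angles_eq: "gen_angles l = (\<chi> m. 2 * aa m l)"
  unfolding gen_angles_def
proof (rule the_equality)
  show "(\<forall>i. (\<chi> m. 2 * aa m l) $ i > 0) \<and>
     (\<forall>i j k. i \<noteq> j \<and> j \<noteq> k \<and> i \<noteq> k \<longrightarrow>
        exp (l $ i) / 2 = 2 / ((\<chi> m. 2 * aa m l) $ j * (\<chi> m. 2 * aa m l) $ k))"
    using cand_ok by (simp add: aa_def)
next
  fix \<theta> :: "real^3"
  assume a: "(\<forall>i. \<theta> $ i > 0) \<and>
     (\<forall>i j k. i \<noteq> j \<and> j \<noteq> k \<and> i \<noteq> k \<longrightarrow>
        exp (l $ i) / 2 = 2 / (\<theta> $ j * \<theta> $ k))"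
  have pos: "\<And>i. \<theta> $ i > 0" using a by auto
  have e: "\<And>i j k. i \<noteq> j \<Longrightarrow> j \<noteq> k \<Longrightarrow> i \<noteq> k \<Longrightarrow> \<theta> $ j * \<theta> $ k = 4 * exp (- l $ i)"
  proof -
    fix i j k :: 3 assume "i \<noteq> j" "j \<noteq> k" "i \<noteq> k"
    then have "exp (l $ i) / 2 = 2 / (\<theta> $ j * \<theta> $ k)" using a by blast
    moreover have "\<theta> $ j * \<theta> $ k > 0" using pos by simp
    ultimately show "\<theta> $ j * \<theta> $ k = 4 * exp (- l $ i)"
      by (simp add: field_simps exp_minus)
  qed
  have c: "\<And>i j k. i \<noteq> j \<Longrightarrow> j \<noteq> k \<Longrightarrow> i \<noteq> k \<Longrightarrow> (2 * aa j l) * (2 * aa k l) = 4 * exp (- l $ i)"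
  proof -
    fix i j k :: 3 assume h: "i \<noteq> j" "j \<noteq> k" "i \<noteq> k"
    have "exp (l $ i) / 2 = 2 / ((2 * aa j l) * (2 * aa k l))" using cand_ok[OF h] .
    moreover have "(2 * aa j l) * (2 * aa k l) > 0" by (simp add: aa_def)
    ultimately show "(2 * aa j l) * (2 * aa k l) = 4 * exp (- l $ i)"
      by (simp add: field_simps exp_minus)
  qed
  have sq: "\<And>i j k. i \<noteq> j \<Longrightarrow> j \<noteq> k \<Longrightarrow> i \<noteq> k \<Longrightarrow> \<theta> $ i = 2 * aa i l"
  proof -
    fix i j k :: 3 assume h: "i \<noteq> j" "j \<noteq> k" "i \<noteq> k"
    have t1: "\<theta> $ i * \<theta> $ j = 4 * exp (- l $ k)" using e[of k i j] h by (simp add: mult.commute)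
    have t2: "\<theta> $ i * \<theta> $ k = 4 * exp (- l $ j)" using e[of j i k] h by simp
    have t3: "\<theta> $ j * \<theta> $ k = 4 * exp (- l $ i)" using e[of i j k] h by simp
    have u1: "(2 * aa i l) * (2 * aa j l) = 4 * exp (- l $ k)" using c[of k i j] h by (simp add: mult.commute)
    have u2: "(2 * aa i l) * (2 * aa k l) = 4 * exp (- l $ j)" using c[of j i k] h by simp
    have u3: "(2 * aa j l) * (2 * aa k l) = 4 * exp (- l $ i)" using c[of i j k] h by simp
    have "(\<theta> $ i)^2 = (\<theta> $ i * \<theta> $ j) * (\<theta> $ i * \<theta> $ k) / (\<theta> $ j * \<theta> $ k)"
      using pos[of j] pos[of k] by (simp add: field_simps power2_eq_square)
    also have "\<dots> = (2 * aa i l)^2"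
      unfolding t1 t2 t3 u1[symmetric] u2[symmetric] u3[symmetric]
      by (simp add: field_simps power2_eq_square aa_def)
    finally have "(\<theta> $ i)^2 = (2 * aa i l)^2" .
    moreover have "2 * aa i l \<ge> 0" by (simp add: aa_def)
    ultimately show "\<theta> $ i = 2 * aa i l"
      using pos[of i] power2_eq_imp_eq[of "\<theta> $ i" "2 * aa i l"] by linarith
  qed
  show "\<theta> = (\<chi> m. 2 * aa m l)"
    unfolding vec_eq_iff forall_3 using sq[of 1 2 3] sq[of 2 1 3] sq[of 3 1 2] by simp
qed

lemma xcoef_eq: "xcoef l $ i = (\<Sum>m\<in>UNIV. aa m l) - 2 * aa i l"
  by (simp add: xcoef_def gen_angles_eq sum_diff1 sum_distrib_left[symmetric]; simp add: field_simps)

fun ES :: "(real \<times> (real^3)) list \<Rightarrow> real^3 \<Rightarrow> real" where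
  "ES [] l = 0"
| "ES (p # ps) l = fst p * exp (snd p \<bullet> l) + ES ps l"

definition dES :: "real^3 \<Rightarrow> (real \<times> (real^3)) list \<Rightarrow> (real \<times> (real^3)) list" where
  "dES v ps = map (\<lambda>p. (fst p * (snd p \<bullet> v), snd p)) ps"

lemma dES_simps[simp]: "dES v [] = []" "dES v (p # ps) = (fst p * (snd p \<bullet> v), snd p) # dES v ps"
  by (simp_all add: dES_def)

lemma ES_deriv: "((\<lambda>t. ES ps (l + t *\<^sub>R v)) has_real_derivative ES (dES v ps) (l + t *\<^sub>R v)) (at t)"
proof (induction ps)
  case Nil
  then show ?case by simp
next
  case (Cons p ps)
  have e: "(\<lambda>t. fst p * exp (snd p \<bullet> (l + t *\<^sub>R v))) = (\<lambda>t. fst p * exp (snd p \<bullet> l + t * (snd p \<bullet> v)))"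
    by (simp add: inner_add_right)
  have "((\<lambda>t. fst p * exp (snd p \<bullet> l + t * (snd p \<bullet> v))) has_real_derivative
        fst p * (snd p \<bullet> v) * exp (snd p \<bullet> l + t * (snd p \<bullet> v))) (at t)"
    by (rule derivative_eq_intros refl | simp)+
  then have "((\<lambda>t. fst p * exp (snd p \<bullet> (l + t *\<^sub>R v))) has_real_derivative
        fst p * (snd p \<bullet> v) * exp (snd p \<bullet> (l + t *\<^sub>R v))) (at t)"
    by (simp add: e inner_add_right)
  from DERIV_add[OF this Cons.IH] show ?case by simp
qed

lemma ES_pd: "pd i (ES ps) = ES (dES (axis i 1) ps)"
proof
  fix l
  show "pd i (ES ps) l = ES (dES (axis i 1) ps) l"
    unfolding pd_def using DERIV_imp_deriv[OF ES_deriv[of ps l "axis i 1" 0]] by simp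
qed

lemma iter_pd_ES: "\<exists>qs. iter_pd ls (ES ps) = ES qs"
proof (induction ls)
  case Nil then show ?case by auto
next
  case (Cons i ls)
  then obtain qs where "iter_pd ls (ES ps) = ES qs" by blast
  then show ?case by (auto simp: ES_pd)
qed

lemma ES_cont: "continuous_on UNIV (ES ps)"
  by (induction ps) (auto intro!: continuous_intros)

lemma smooth_ES: "smooth3 (ES ps)"
  unfolding smooth3_def
proof (intro allI conjI)
  fix ls i l
  obtain qs where q: "iter_pd ls (ES ps) = ES qs" using iter_pd_ES by blast
  show "continuous_on UNIV (iter_pd ls (ES ps))" using q ES_cont by simp
  show "(\<lambda>t. iter_pd ls (ES ps) (l + t *\<^sub>R axis i 1)) differentiable at 0"
    using q ES_deriv[of qs l "axis i 1" 0] real_differentiable_def by auto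
qed

lemma ES_frechet: "(ES ps has_derivative (\<lambda>h. ES (dES h ps) l)) (at l)"
proof (induction ps)
  case Nil
  then show ?case by simp
next
  case (Cons p ps)
  have "((\<lambda>l. fst p * exp (snd p \<bullet> l)) has_derivative (\<lambda>h. fst p * (snd p \<bullet> h) * exp (snd p \<bullet> l))) (at l)"
    by (auto intro!: derivative_eq_intros simp: algebra_simps)
  from has_derivative_add[OF this Cons.IH] show ?case by (simp add: o_def)
qed

definition psX :: "3 \<Rightarrow> (real \<times> (real^3)) list" where
  "psX i = [(1, ww 1), (1, ww 2), (1, ww 3), (-2, ww i)]"
definition psW :: "(real \<times> (real^3)) list" where
  "psW = [(6, 0), (-2, ww 1), (-2, ww 2), (-2, ww 3)]"

lemma xcoef_ES: "(\<lambda>l. xcoef l $ i) = ES (psX i)"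
  by (rule ext) (simp add: xcoef_eq sum_3 aa_def psX_def)

lemma W0: "ES psW 0 = 0"
  by (simp add: psW_def)

lemma dW: "ES (dES h psW) z = xcoef z \<bullet> h"
proof -
  have e: "xcoef z \<bullet> h = xcoef z $ 1 * h $ 1 + xcoef z $ 2 * h $ 2 + xcoef z $ 3 * h $ 3"
    by (simp add: inner_vec_def sum_3)
  show ?thesis unfolding e
    by (simp add: psW_def xcoef_eq sum_3 aa_def[symmetric] ww_inner3[of h] field_simps)
qed

lemma Wfun_ES: "Wfun = ES psW"
proof
  fix l :: "real^3"
  have d: "\<And>t. ((\<lambda>t. ES psW (0 + t *\<^sub>R l)) has_real_derivative (\<Sum>i\<in>UNIV. xcoef (t *\<^sub>R l) $ i * l $ i)) (at t)"
    using ES_deriv[of psW 0 l] by (simp add: dW inner_vec_def mult.commute)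
  have dv: "\<And>t. ((\<lambda>t. ES psW (0 + t *\<^sub>R l)) has_vector_derivative (\<Sum>i\<in>UNIV. xcoef (t *\<^sub>R l) $ i * l $ i)) (at t within {0..1})"
    using has_field_derivative_at_within[OF d] by (simp only: has_real_derivative_iff_has_vector_derivative)
  have "((\<lambda>t. \<Sum>i\<in>UNIV. xcoef (t *\<^sub>R l) $ i * l $ i) has_integral (ES psW (0 + 1 *\<^sub>R l) - ES psW (0 + 0 *\<^sub>R l))) {0..1}"
    by (rule fundamental_theorem_of_calculus) (use dv in auto)
  then show "Wfun l = ES psW l"
    unfolding Wfun_def using W0 by (simp add: integral_unique)
qed

lemma pd_W: "pd i Wfun l = xcoef l $ i"
  by (simp add: Wfun_ES ES_pd dW inner_axis)

lemma pd_W_fun: "pd j Wfun = (\<lambda>l. xcoef l $ j)"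
  using pd_W by blast

lemma sym_x: "pd j (\<lambda>l'. xcoef l' $ i) l = pd i (\<lambda>l'. xcoef l' $ j) l"
  unfolding xcoef_ES ES_pd
  using exhaust_3[of i] exhaust_3[of j]
  by (auto simp: psX_def inner_axis ww_def)

lemma W_deriv: "(Wfun has_derivative (\<lambda>h. xcoef l \<bullet> h)) (at l)"
  using ES_frechet[of psW l] by (simp add: Wfun_ES dW)

lemma hess_entry: "pd i (pd j Wfun) l = (\<Sum>m\<in>UNIV. ww m $ i * aa m l) - 2 * ww j $ i * aa j l"
  by (simp add: pd_W_fun xcoef_ES ES_pd psX_def inner_axis sum_3 aa_def)

lemma hess_form: "v \<bullet> (hessian3 Wfun l *v v) = -2 * (\<Sum>m\<in>UNIV. aa m l * (ww m \<bullet> v)^2)"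
proof -
  have rhs: "(\<Sum>m\<in>UNIV. aa m l * (ww m \<bullet> v)^2) = aa 1 l * ((v$1 - v$2 - v$3)/2)^2
     + aa 2 l * ((v$2 - v$1 - v$3)/2)^2 + aa 3 l * ((v$3 - v$1 - v$2)/2)^2"
    by (simp add: sum_3 ww_inner3)
  have lhs: "v \<bullet> (hessian3 Wfun l *v v) = (\<Sum>i\<in>UNIV. v $ i * (\<Sum>j\<in>UNIV. pd i (pd j Wfun) l * v $ j))"
    by (simp add: inner_vec_def matrix_vector_mult_def hessian3_def)
  show ?thesis unfolding lhs rhs hess_entry
    by (simp add: sum_3 ww_def power2_eq_square field_simps)
qed

lemma exp_gt_lin: "x \<noteq> 0 \<Longrightarrow> 1 + x < exp (x::real)"
proof (cases "x \<le> -1")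
  case True then show ?thesis using exp_gt_zero[of x] by linarith
next
  case False
  assume x0: "x \<noteq> 0"
  have a: "1 + x/2 \<le> exp (x/2)" using exp_ge_add_one_self[of "x/2"] by simp
  have b: "0 \<le> 1 + x/2" using False by simp
  have "(1 + x/2) * (1 + x/2) \<le> exp (x/2) * exp (x/2)" using mult_mono[OF a a _ b] by simp
  also have "\<dots> = exp x" by (simp add: exp_add[symmetric])
  finally have "1 + x + x*x/4 \<le> exp x" by (simp add: algebra_simps)
  moreover have "x*x > 0" using x0 not_real_square_gt_zero by blast
  ultimately show ?thesis by linarith
qed

lemma exp_strict_cvx:
  assumes "p \<noteq> q" "0 < t" "t < 1"
  shows "exp ((1-t)*p + t*q) < (1-t)*exp p + t*exp (q::real)"
proof -
  define m where "m = (1-t)*p + t*q"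
  have "p - m = t * (p - q)" by (simp add: m_def algebra_simps)
  then have p1: "p - m \<noteq> 0" using assms by simp
  have "q - m = (1 - t) * (q - p)" by (simp add: m_def algebra_simps)
  then have q1: "q - m \<noteq> 0" using assms by simp
  have ep: "exp m * (1 + (p - m)) < exp p"
    using mult_strict_left_mono[OF exp_gt_lin[OF p1], of "exp m"] by (simp add: exp_add[symmetric])
  have eq: "exp m * (1 + (q - m)) < exp q"
    using mult_strict_left_mono[OF exp_gt_lin[OF q1], of "exp m"] by (simp add: exp_add[symmetric])
  have "(1-t) * (exp m * (1 + (p - m))) + t * (exp m * (1 + (q - m))) < (1-t)*exp p + t*exp q"
    using ep eq assms by (intro add_strict_mono mult_strict_left_mono) auto
  moreover have "(1-t) * (exp m * (1 + (p - m))) + t * (exp m * (1 + (q - m))) = exp m"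
    by (simp add: m_def algebra_simps)
  ultimately show ?thesis by (simp add: m_def)
qed

lemma ww_zero: "(\<forall>m. ww m \<bullet> v = 0) \<Longrightarrow> v = 0"
  unfolding vec_eq_iff forall_3 by (simp add: ww_inner3)

lemma neg_def: "v \<noteq> 0 \<Longrightarrow> v \<bullet> (hessian3 Wfun l *v v) < 0"
proof -
  assume "v \<noteq> 0"
  then obtain m0 where m0: "ww m0 \<bullet> v \<noteq> 0" using ww_zero by blast
  have "0 < (\<Sum>m\<in>UNIV. aa m l * (ww m \<bullet> v)^2)"
    by (rule sum_pos2[of UNIV m0]) (use m0 in \<open>auto simp: aa_def\<close>)
  then show ?thesis unfolding hess_form by simp
qed

lemma ES_psW: "ES psW l = 6 - 2 * (\<Sum>m\<in>UNIV. aa m l)"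
  by (simp add: psW_def sum_3 aa_def)

lemma alg: "(A::real) < (1-t)*X + t*Y \<Longrightarrow> (1-t)*(6 - 2*X) + t*(6-2*Y) < 6 - 2*A"
  by (simp add: algebra_simps)

lemma strict_conc: "strictly_concave_on UNIV Wfun"
  unfolding strictly_concave_on_def
proof (intro conjI ballI allI impI)
  show "convex (UNIV :: (real^3) set)" by simp
  fix x y :: "real^3" and t :: real
  assume h: "x \<noteq> y \<and> 0 < t \<and> t < 1"
  then have ht: "0 < t" "t < 1" by auto
  have "\<exists>m. ww m \<bullet> x \<noteq> ww m \<bullet> y"
  proof (rule ccontr)
    assume "\<not> ?thesis"
    then have "\<forall>m. ww m \<bullet> (x - y) = 0" by (simp add: inner_diff_right)
    then have "x - y = 0" by (rule ww_zero)
    then show False using h by simp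
  qed
  then obtain m0 where m0: "ww m0 \<bullet> x \<noteq> ww m0 \<bullet> y" by blast
  have lin: "\<And>m. ww m \<bullet> ((1 - t) *\<^sub>R x + t *\<^sub>R y) = (1-t) * (ww m \<bullet> x) + t * (ww m \<bullet> y)"
    by (simp add: inner_add_right)
  have le: "\<And>m. aa m ((1 - t) *\<^sub>R x + t *\<^sub>R y) \<le> (1-t) * aa m x + t * aa m y"
  proof -
    fix m
    show "aa m ((1 - t) *\<^sub>R x + t *\<^sub>R y) \<le> (1-t) * aa m x + t * aa m y"
    proof (cases "ww m \<bullet> x = ww m \<bullet> y")
      case True then show ?thesis by (simp add: aa_def lin algebra_simps)
    next
      case False then show ?thesis using exp_strict_cvx[OF False ht] by (simp add: aa_def lin)
    qed
  qed
  have lt: "aa m0 ((1 - t) *\<^sub>R x + t *\<^sub>R y) < (1-t) * aa m0 x + t * aa m0 y"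
    using exp_strict_cvx[OF m0 ht] by (simp add: aa_def lin)
  have "(\<Sum>m\<in>UNIV. aa m ((1 - t) *\<^sub>R x + t *\<^sub>R y)) < (\<Sum>m\<in>UNIV. (1-t) * aa m x + t * aa m y)"
    by (rule sum_strict_mono_ex1) (use le lt in auto)
  moreover have "(\<Sum>m\<in>UNIV. (1-t) * aa m x + t * aa m y) = (1-t) * (\<Sum>m\<in>UNIV. aa m x) + t * (\<Sum>m\<in>UNIV. aa m y)"
    by (simp add: sum.distrib sum_distrib_left)
  ultimately have "(\<Sum>m\<in>UNIV. aa m ((1 - t) *\<^sub>R x + t *\<^sub>R y)) < (1-t) * (\<Sum>m\<in>UNIV. aa m x) + t * (\<Sum>m\<in>UNIV. aa m y)"
    by simp
  then show "Wfun ((1 - t) *\<^sub>R x + t *\<^sub>R y) > (1 - t) * Wfun x + t * Wfun y"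
    unfolding Wfun_ES ES_psW by (rule alg)
qed

theorem lemma2p3:
  shows "(\<forall>i. smooth3 (\<lambda>l. xcoef l $ i))
    \<and> (\<forall>i j l. pd j (\<lambda>l'. xcoef l' $ i) l = pd i (\<lambda>l'. xcoef l' $ j) l)
    \<and> smooth3 Wfun
    \<and> strictly_concave_on UNIV Wfun
    \<and> (\<forall>l v. v \<noteq> 0 \<longrightarrow> v \<bullet> (hessian3 Wfun l *v v) < 0)
    \<and> (\<forall>l. (Wfun has_derivative (\<lambda>h. xcoef l \<bullet> h)) (at l))
    \<and> (\<forall>i l. pd i Wfun l = xcoef l $ i)"
proof -
  have s1: "\<forall>i. smooth3 (\<lambda>l. xcoef l $ i)" by (simp add: xcoef_ES smooth_ES)
  have s2: "smooth3 Wfun" by (simp add: Wfun_ES smooth_ES)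
  show ?thesis using s1 s2 sym_x strict_conc neg_def W_deriv pd_W by blast
qed

end
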